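(* With $V$ satisfying (C1)–(C4), $\mathbb P(A):=V_A(1_\Omega)$, and $u^+$ as defined in the context, the map $T_{u^+}(f):=\int_\Omega u^+(\omega,f(\omega))\,\mathbb P(d\omega)$ is well defined and finite on $\mathcal L^\infty(\Omega,\mathcal F)$, monotone with respect to the pointwise order, pointwise continuous (if $(f_n)$ is uniformly bounded and $f_n\to f$ pointwise everywhere then $T_{u^+}(f_n)\to T_{u^+}(f)$), and satisfies $V_A(f)=T_{u^+}(f1_A)$ for every $f\in\mathcal L^\infty(\Omega,\mathcal F)$ and $A\in\mathcal F$.
   Context: $\mathcal L^\infty(\Omega,\mathcal F)$: bounded $\mathcal F$-measurable real functions; $V:\mathcal F\times\mathcal L^\infty(\Omega,\mathcal F)\to\mathbb R$, $(A,f)\mapsto V_A(f)$, with: (C1) for every $f$, $A\mapsto V_A(f)$ is a finite signed measure, $V_A(0)=0$, and $A\mapsto V_A(1_\Omega)$ is a probability measure; (C2) $V_A(f)=V_\Omega(f1_A)$; (C3) $f\le g$ pointwise implies $V_A(f)\le V_A(g)$, and $\mathbb P(A)>0$ implies $V_A(x)<V_A(y)$ for real $x<y$; (C4) $V_A(f_n)\to V_A(f)$ whenever $(f_n)$ is uniformly bounded and converges pointwise everywhere to $f$. For $q\in\mathbb Q$, $u(\cdot,q)$ is a version of $d\mu_q/d\mathbb P$, $\mu_q(A):=V_A(q)$, with $u(\cdot,0)\equiv0$. $\Theta:=\{\omega: u(\omega,q_1)<u(\omega,q_2)\ \forall q_1<q_2\in\mathbb Q\}\cap\{\omega: u(\omega,q)=\inf_{\tilde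 q\in\mathbb Q,\tilde q>q}u(\omega,\tilde q)\ \forall q\in\mathbb Q\}$, and $u^+(\omega,x):=\inf_{q\in\mathbb Q,q\ge x}\{u(\omega,q)1_\Theta(\omega)+x1_{\Omega\setminus\Theta}(\omega)\}$. *)

theory Defs
  imports "HOL-Analysis.Analysis"
begin

definition Linf :: "'a measure \<Rightarrow> ('a \<Rightarrow> real) set" where
  "Linf M = {f. f \<in> borel_measurable M \<and> (\<exists>B. \<forall>x\<in>space M. \<bar>f x\<bar> \<le> B)}"

definition finite_signed_measure :: "'a measure \<Rightarrow> ('a set \<Rightarrow> real) \<Rightarrow> bool" where
  "finite_signed_measure M \<mu> \<longleftrightarrow> \<mu> {} = 0 \<and>
     (\<forall>A :: nat \<Rightarrow> 'a set. range A \<subseteq> sets M \<longrightarrow> disjoint_family A \<longrightarrow>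
        (\<lambda>n. \<mu> (A n)) sums \<mu> (\<Union>n. A n))"

definition probability_set_function :: "'a measure \<Rightarrow> ('a set \<Rightarrow> real) \<Rightarrow> bool" where
  "probability_set_function M \<mu> \<longleftrightarrow> finite_signed_measure M \<mu> \<and>
     (\<forall>A\<in>sets M. 0 \<le> \<mu> A) \<and> \<mu> (space M) = 1"

definition Pm :: "'a measure \<Rightarrow> ('a set \<Rightarrow> ('a \<Rightarrow> real) \<Rightarrow> real) \<Rightarrow> 'a measure" where
  "Pm M V = measure_of (space M) (sets M) (\<lambda>A. ennreal (V A (\<lambda>_. 1)))"

definition Theta :: "('a \<Rightarrow> rat \<Rightarrow> real) \<Rightarrow> 'a set" where
  "Theta u = {\<omega>. (\<forall>q1 q2. q1 < q2 \<longrightarrow> u \<omega> q1 < u \<omega> q2)}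
           \<inter> {\<omega>. (\<forall>q. u \<omega> q = Inf (u \<omega> ` {q'. q' > q}))}"

definition u_plus :: "('a \<Rightarrow> rat \<Rightarrow> real) \<Rightarrow> 'a \<Rightarrow> real \<Rightarrow> real" where
  "u_plus u \<omega> x = Inf ((\<lambda>q. u \<omega> q * indicator (Theta u) \<omega> + x * indicator (- Theta u) \<omega>)
                        ` {q. x \<le> real_of_rat q})"

definition T_u :: "'a measure \<Rightarrow> ('a set \<Rightarrow> ('a \<Rightarrow> real) \<Rightarrow> real) \<Rightarrow> ('a \<Rightarrow> rat \<Rightarrow> real)
                    \<Rightarrow> ('a \<Rightarrow> real) \<Rightarrow> real" where
  "T_u M V u f = (\<integral>\<omega>. u_plus u \<omega> (f \<omega>) \<partial>(Pm M V))"

end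

theory Submission imports Defs begin

lemma up_ne: "{q. x \<le> real_of_rat q} \<noteq> {}"
  proof -
  have "x \<le> real_of_rat (of_int \<lceil>x\<rceil>)" by (simp add: of_rat_of_int_eq)
  then show ?thesis by blast
qed

lemma up_off: "\<omega> \<notin> Theta u \<Longrightarrow> u_plus u \<omega> x = x"
proof -
  assume h: "\<omega> \<notin> Theta u"
  have ne: "{q. x \<le> real_of_rat q} \<noteq> {}" by (rule up_ne)
  have "(\<lambda>q. u \<omega> q * indicator (Theta u) \<omega> + x * indicator (- Theta u) \<omega>) ` {q. x \<le> real_of_rat q} = {x}"
    using h ne by auto
  then show ?thesis unfolding u_plus_def by simp
qed

lemma up_on: "\<omega> \<in> Theta u \<Longrightarrow> u_plus u \<omega> x = Inf (u \<omega> ` {q. x \<le> real_of_rat q})"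
  unfolding u_plus_def by simp

lemma Th_mono: "\<omega> \<in> Theta u \<Longrightarrow> q1 < q2 \<Longrightarrow> u \<omega> q1 < u \<omega> q2"
  unfolding Theta_def by blast

lemma Th_mono': "\<omega> \<in> Theta u \<Longrightarrow> q1 \<le> q2 \<Longrightarrow> u \<omega> q1 \<le> u \<omega> q2"
  using Th_mono[of \<omega> u q1 q2] by (metis order.order_iff_strict order.strict_implies_order)

lemma Th_rc: "\<omega> \<in> Theta u \<Longrightarrow> u \<omega> q = Inf (u \<omega> ` {q'. q' > q})"
  unfolding Theta_def by blast


lemma up_bdd: "\<omega> \<in> Theta u \<Longrightarrow> bdd_below (u \<omega> ` {q. x \<le> real_of_rat q})"
proof -
  assume th: "\<omega> \<in> Theta u"
  have "\<forall>q\<in>{q. x \<le> real_of_rat q}. u \<omega> (of_int \<lfloor>x\<rfloor>) \<le> u \<omega> q"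
  proof
    fix q assume "q \<in> {q. x \<le> real_of_rat q}"
    then have "real_of_rat (of_int \<lfloor>x\<rfloor>) \<le> real_of_rat q"
      by (simp add: of_rat_of_int_eq) linarith
    then have "of_int \<lfloor>x\<rfloor> \<le> q" by (metis of_rat_less_eq)
    then show "u \<omega> (of_int \<lfloor>x\<rfloor>) \<le> u \<omega> q" using Th_mono'[OF th] by blast
  qed
  then show ?thesis by (auto simp: bdd_below_def)
qed

lemma up_rat: "\<omega> \<in> Theta u \<Longrightarrow> u_plus u \<omega> (real_of_rat r) = u \<omega> r"
  unfolding up_on
  by (rule cInf_eq_minimum) (auto simp: of_rat_less_eq intro: Th_mono')

lemma up_mono: "\<omega> \<in> Theta u \<Longrightarrow> x \<le> y \<Longrightarrow> u_plus u \<omega> x \<le> u_plus u \<omega> y"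
proof -
  assume th: "\<omega> \<in> Theta u" and xy: "x \<le> y"
  have ne: "u \<omega> ` {q. y \<le> real_of_rat q} \<noteq> {}" using up_ne[of y] by blast
  have sub: "u \<omega> ` {q. y \<le> real_of_rat q} \<subseteq> u \<omega> ` {q. x \<le> real_of_rat q}"
    using xy by (intro image_mono) auto
  show ?thesis unfolding up_on[OF th]
    by (rule cInf_superset_mono[OF ne up_bdd[OF th] sub])
qed

lemma up_rc: 
  assumes th: "\<omega> \<in> Theta u" and e: "e > 0"
  shows "\<exists>q. x < real_of_rat q \<and> u \<omega> q < u_plus u \<omega> x + e"
proof (cases "x \<in> \<rat>")
  case True
  then obtain r where r: "x = real_of_rat r" by (auto simp: Rats_def)
  have "Inf (u \<omega> ` {q'. q' > r}) < u \<omega> r + e" using Th_rc[OF th, of r] e by simp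
  then obtain q where "q > r" "u \<omega> q < u \<omega> r + e"
  proof -
    have "{q'. q' > r} \<noteq> {}" using gt_ex[of r] by auto
    then have "\<exists>y\<in>u \<omega> ` {q'. q' > r}. y < u \<omega> r + e"
      using cInf_lessD[of "u \<omega> ` {q'. q' > r}"] \<open>Inf (u \<omega> ` {q'. q' > r}) < u \<omega> r + e\<close> by blast
    then show ?thesis using that by auto
  qed
  then show ?thesis using r up_rat[OF th, of r] by (auto simp: of_rat_less)
next
  case False
  have "Inf (u \<omega> ` {q. x \<le> real_of_rat q}) < u_plus u \<omega> x + e" using up_on[OF th, of x] e by simp
  then obtain q where q: "x \<le> real_of_rat q" "u \<omega> q < u_plus u \<omega> x + e"
    using cInf_lessD[of "u \<omega> ` {q. x \<le> real_of_rat q}"] up_ne by blast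
  moreover have "x \<noteq> real_of_rat q" using False by auto
  ultimately show ?thesis by force
qed

lemma up_cont:
  assumes th: "\<omega> \<in> Theta u" and ge: "\<And>n. x \<le> xs n" and lim: "xs \<longlonglongrightarrow> x"
  shows "(\<lambda>n. u_plus u \<omega> (xs n)) \<longlonglongrightarrow> u_plus u \<omega> x"
proof (rule order_tendstoI)
  fix a assume "a < u_plus u \<omega> x"
  then show "\<forall>\<^sub>F n in sequentially. a < u_plus u \<omega> (xs n)"
    using up_mono[OF th ge] by (intro always_eventually allI) (blast intro: less_le_trans)
next
  fix a assume a: "u_plus u \<omega> x < a"
  then obtain q where q: "x < real_of_rat q" "u \<omega> q < u_plus u \<omega> x + (a - u_plus u \<omega> x)"
    using up_rc[OF th, of "a - u_plus u \<omega> x" x] by auto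
  have "\<forall>\<^sub>F n in sequentially. xs n < real_of_rat q" using order_tendstoD(2)[OF lim q(1)] .
  then show "\<forall>\<^sub>F n in sequentially. u_plus u \<omega> (xs n) < a"
  proof eventually_elim
    case (elim n)
    then have "u_plus u \<omega> (xs n) \<le> u \<omega> q" using up_mono[OF th, of "xs n" "real_of_rat q"] up_rat[OF th] by simp
    then show ?case using q by simp
  qed
qed


locale setting =
  fixes M :: "'a measure"
    and V :: "'a set \<Rightarrow> ('a \<Rightarrow> real) \<Rightarrow> real"
    and u :: "'a \<Rightarrow> rat \<Rightarrow> real"
  assumes C1_signed: "\<And>f. f \<in> Linf M \<Longrightarrow> finite_signed_measure M (\<lambda>A. V A f)"
    and C1_zero: "\<And>A. A \<in> sets M \<Longrightarrow> V A (\<lambda>_. 0) = 0"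
    and C1_prob: "probability_set_function M (\<lambda>A. V A (\<lambda>_. 1))"
    and C2: "\<And>A f. A \<in> sets M \<Longrightarrow> f \<in> Linf M \<Longrightarrow>
               V A f = V (space M) (\<lambda>\<omega>. f \<omega> * indicator A \<omega>)"
    and C3_mono: "\<And>A f g. A \<in> sets M \<Longrightarrow> f \<in> Linf M \<Longrightarrow> g \<in> Linf M \<Longrightarrow>
               (\<forall>\<omega>\<in>space M. f \<omega> \<le> g \<omega>) \<Longrightarrow> V A f \<le> V A g"
    and C3_strict: "\<And>A (x::real) y. A \<in> sets M \<Longrightarrow> V A (\<lambda>_. 1) > 0 \<Longrightarrow> x < y \<Longrightarrow>
               V A (\<lambda>_. x) < V A (\<lambda>_. y)"
    and C4: "\<And>A fn f. A \<in> sets M \<Longrightarrow> (\<forall>n. fn n \<in> Linf M) \<Longrightarrow> f \<in> Linf M \<Longrightarrow>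
               (\<exists>B. \<forall>n. \<forall>\<omega>\<in>space M. \<bar>fn n \<omega>\<bar> \<le> B) \<Longrightarrow>
               (\<forall>\<omega>\<in>space M. (\<lambda>n. fn n \<omega>) \<longlonglongrightarrow> f \<omega>) \<Longrightarrow>
               (\<lambda>n. V A (fn n)) \<longlonglongrightarrow> V A f"
    and u_meas: "\<And>q. (\<lambda>\<omega>. u \<omega> q) \<in> borel_measurable M"
    and u_int: "\<And>q. integrable (Pm M V) (\<lambda>\<omega>. u \<omega> q)"
    and u_RN: "\<And>q A. A \<in> sets M \<Longrightarrow>
               V A (\<lambda>_. real_of_rat q) = set_lebesgue_integral (Pm M V) A (\<lambda>\<omega>. u \<omega> q)"
    and u_zero: "\<And>\<omega>. u \<omega> 0 = 0"
begin

abbreviation "P \<equiv> Pm M V"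

lemma sets_P[simp, measurable_cong]: "sets P = sets M"
  unfolding Pm_def by simp

lemma space_P[simp]: "space P = space M"
  unfolding Pm_def by simp

lemma P1_nonneg: "A \<in> sets M \<Longrightarrow> 0 \<le> V A (\<lambda>_. 1)"
  using C1_prob unfolding probability_set_function_def by auto

lemma emeasure_P: "A \<in> sets M \<Longrightarrow> emeasure P A = ennreal (V A (\<lambda>_. 1))"
  unfolding Pm_def
proof (rule emeasure_measure_of_sigma)
  show "sigma_algebra (space M) (sets M)" by (rule sets.sigma_algebra_axioms)
  have fs: "finite_signed_measure M (\<lambda>A. V A (\<lambda>_. 1))"
    using C1_prob unfolding probability_set_function_def by auto
  show "positive (sets M) (\<lambda>A. ennreal (V A (\<lambda>_. 1)))"
    using fs unfolding positive_def finite_signed_measure_def by auto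
  show "countably_additive (sets M) (\<lambda>A. ennreal (V A (\<lambda>_. 1)))"
    unfolding countably_additive_def
  proof safe
    fix A :: "nat \<Rightarrow> 'a set" assume A: "range A \<subseteq> sets M" "disjoint_family A" "\<Union> (range A) \<in> sets M"
    then have s: "(\<lambda>n. V (A n) (\<lambda>_. 1)) sums V (\<Union>n. A n) (\<lambda>_. 1)"
      using fs unfolding finite_signed_measure_def by auto
    have "(\<Sum>i. ennreal (V (A i) (\<lambda>_. 1))) = ennreal (\<Sum>i. V (A i) (\<lambda>_. 1))"
      using A(1) s by (intro suminf_ennreal2) (auto intro!: P1_nonneg simp: sums_iff)
    then show "(\<Sum>i. ennreal (V (A i) (\<lambda>_. 1))) = ennreal (V (\<Union> (range A)) (\<lambda>_. 1))"
      using s by (simp add: sums_iff)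
  qed
qed


lemma measure_P: "A \<in> sets M \<Longrightarrow> measure P A = V A (\<lambda>_. 1)"
  unfolding measure_def by (simp add: emeasure_P P1_nonneg)

lemma Linf_const: "(\<lambda>_. c) \<in> Linf M"
  unfolding Linf_def by auto

lemma V_space_rat: "V (space M) (\<lambda>_. real_of_rat q) = integral\<^sup>L P (\<lambda>\<omega>. u \<omega> q)"
proof -
  have "V (space M) (\<lambda>_. real_of_rat q) = set_lebesgue_integral P (space M) (\<lambda>\<omega>. u \<omega> q)"
    by (rule u_RN) simp
  also have "\<dots> = integral\<^sup>L P (\<lambda>\<omega>. u \<omega> q)"
    unfolding set_lebesgue_integral_def by (intro Bochner_Integration.integral_cong) auto
  finally show ?thesis .
qed

lemma AE_mono_pair: "q1 < q2 \<Longrightarrow> AE \<omega> in P. u \<omega> q1 < u \<omega> q2"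
proof -
  assume q: "q1 < q2"
  define A where "A = {\<omega>\<in>space M. u \<omega> q2 \<le> u \<omega> q1}"
  have A: "A \<in> sets M" unfolding A_def using u_meas by measurable
  have "V A (\<lambda>_. 1) \<le> 0"
  proof (rule ccontr)
    assume "\<not> V A (\<lambda>_. 1) \<le> 0"
    then have "V A (\<lambda>_. real_of_rat q1) < V A (\<lambda>_. real_of_rat q2)"
      using C3_strict[OF A] q by (simp add: of_rat_less)
    moreover have "V A (\<lambda>_. real_of_rat q2) \<le> V A (\<lambda>_. real_of_rat q1)"
    proof -
      have i: "integrable P (\<lambda>\<omega>. indicator A \<omega> *\<^sub>R u \<omega> q)" for q
        using integrable_mult_indicator[of A P "\<lambda>\<omega>. u \<omega> q"] A u_int by simp
      show ?thesis
        unfolding u_RN[OF A] set_lebesgue_integral_def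
        by (rule integral_mono[OF i i]) (auto simp: A_def indicator_def)
    qed
    ultimately show False by simp
  qed
  then have "emeasure P A = 0" using P1_nonneg[OF A] by (simp add: emeasure_P[OF A])
  then show ?thesis
    by (subst AE_iff_measurable[OF _ refl]) (auto simp: A_def not_less intro!: A[unfolded A_def])
qed

lemma AE_mono: "AE \<omega> in P. \<forall>q1 q2. q1 < q2 \<longrightarrow> u \<omega> q1 < u \<omega> q2"
  using AE_mono_pair by (simp add: AE_all_countable)

end
context setting begin

lemma AE_rc: "AE \<omega> in P. u \<omega> q = Inf (u \<omega> ` {q'. q' > q})"
proof -
  define qs where "qs n = q + 1 / (of_nat n + 1)" for n :: nat
  have qs_gt: "qs n > q" for n unfolding qs_def by (simp add: add_pos_pos)
  have qsr: "real_of_rat (qs n) = real_of_rat q + 1 / (real n + 1)" for n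
    unfolding qs_def by (simp add: of_rat_add of_rat_divide)
  define h where "h n \<omega> = ennreal (u \<omega> (qs n) - u \<omega> q)" for n \<omega>
  define H where "H \<omega> = (INF n. h n \<omega>)" for \<omega>
  have hm[measurable]: "h n \<in> borel_measurable P" for n unfolding h_def using u_meas by measurable
  have Hm: "H \<in> borel_measurable P" unfolding H_def by measurable
  define D where "D n = V (space M) (\<lambda>_. real_of_rat (qs n)) - V (space M) (\<lambda>_. real_of_rat q)" for n
  have intu: "integral\<^sup>L P (\<lambda>\<omega>. u \<omega> (qs n) - u \<omega> q) = D n" for n
    unfolding D_def V_space_rat using u_int by simp
  have hn: "integral\<^sup>N P (h n) = ennreal (D n)" for n
  proof -
    have "integral\<^sup>N P (h n) = ennreal (integral\<^sup>L P (\<lambda>\<omega>. u \<omega> (qs n) - u \<omega> q))"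
      unfolding h_def
      by (rule nn_integral_eq_integral) (use u_int AE_mono_pair[OF qs_gt[of n]] in \<open>auto elim!: AE_mp\<close>)
    then show ?thesis using intu by simp
  qed
  have "(\<lambda>n. real_of_rat q + 1 / (real n + 1)) \<longlonglongrightarrow> real_of_rat q + 0"
  proof (intro tendsto_add tendsto_const)
    show "(\<lambda>n. 1 / (real n + 1)) \<longlonglongrightarrow> 0"
      using LIMSEQ_inverse_real_of_nat by (simp add: inverse_eq_divide add.commute)
  qed
  then have lq: "(\<lambda>n. real_of_rat (qs n)) \<longlonglongrightarrow> real_of_rat q" by (simp add: qsr)
  have "(\<lambda>n. V (space M) (\<lambda>_. real_of_rat (qs n))) \<longlonglongrightarrow> V (space M) (\<lambda>_. real_of_rat q)"
  proof (rule C4)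
    show "\<exists>B. \<forall>n. \<forall>\<omega>\<in>space M. \<bar>real_of_rat (qs n)\<bar> \<le> B"
    proof (intro exI allI ballI)
      fix n :: nat
      have "0 \<le> 1 / (real n + 1)" "1 / (real n + 1) \<le> 1" by (auto simp: field_simps)
      then show "\<bar>real_of_rat (qs n)\<bar> \<le> \<bar>real_of_rat q\<bar> + 1" unfolding qsr by linarith
    qed
  qed (use lq in \<open>auto simp: Linf_const\<close>)
  then have D0: "D \<longlonglongrightarrow> 0" unfolding D_def
    using tendsto_diff[OF _ tendsto_const[of "V (space M) (\<lambda>_. real_of_rat q)"]] by fastforce
  have "integral\<^sup>N P H \<le> 0"
  proof (rule LIMSEQ_le_const)
    show "(\<lambda>n. ennreal (D n)) \<longlonglongrightarrow> 0" using tendsto_ennrealI[OF D0] by simp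
    show "\<exists>N. \<forall>n\<ge>N. integral\<^sup>N P H \<le> ennreal (D n)"
      unfolding hn[symmetric] H_def by (intro exI allI impI nn_integral_mono INF_lower) auto
  qed
  then have "AE \<omega> in P. H \<omega> = 0" using nn_integral_0_iff_AE[OF Hm] by simp
  then show ?thesis using AE_mono
  proof eventually_elim
    case (elim \<omega>)
    have mono: "q1 < q2 \<Longrightarrow> u \<omega> q1 < u \<omega> q2" for q1 q2 using elim(2) by blast
    define S where "S = u \<omega> ` {q'. q' > q}"
    have ne: "S \<noteq> {}" unfolding S_def using qs_gt[of 0] by blast
    have lb: "\<And>y. y \<in> S \<Longrightarrow> u \<omega> q \<le> y" unfolding S_def using mono by (auto intro: less_imp_le)
    then have bdd: "bdd_below S" by (auto simp: bdd_below_def)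
    have "u \<omega> q \<le> Inf S" by (rule cInf_greatest[OF ne lb])
    moreover have "Inf S \<le> u \<omega> q"
    proof (rule field_le_epsilon)
      fix e :: real assume e: "0 < e"
      have "H \<omega> < ennreal e" using elim(1) e by simp
      then obtain n where "h n \<omega> < ennreal e" unfolding H_def by (auto simp: INF_less_iff)
      then have "u \<omega> (qs n) - u \<omega> q < e"
        unfolding h_def using mono[OF qs_gt[of n]] by (subst (asm) ennreal_less_iff) auto
      moreover have "Inf S \<le> u \<omega> (qs n)" using qs_gt[of n] by (intro cInf_lower[OF _ bdd]) (auto simp: S_def)
      ultimately show "Inf S \<le> u \<omega> q + e" by simp
    qed
    ultimately show ?case unfolding S_def by (rule antisym)
  qed
qed

end
context setting begin

lemma AE_Theta: "AE \<omega> in P. \<omega> \<in> Theta u"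
proof -
  have "AE \<omega> in P. \<forall>q. u \<omega> q = Inf (u \<omega> ` {q'. q' > q})"
    using AE_rc by (simp add: AE_all_countable)
  then show ?thesis using AE_mono
    by eventually_elim (unfold Theta_def, blast)
qed

lemma Theta_pred[measurable]: "Measurable.pred M (\<lambda>\<omega>. \<omega> \<in> Theta u)"
proof -
  have "(\<lambda>\<omega>. \<omega> \<in> Theta u) = (\<lambda>\<omega>. (\<forall>q1 q2. q1 < q2 \<longrightarrow> u \<omega> q1 < u \<omega> q2) \<and> (\<forall>q. u \<omega> q = (INF q'\<in>{q'. q' > q}. u \<omega> q')))"
    unfolding Theta_def by (intro ext) blast
  also have "Measurable.pred M \<dots>"
    using u_meas by measurable
  finally show ?thesis .
qed

lemma V_empty: "f \<in> Linf M \<Longrightarrow> V {} f = 0"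
  using C1_signed unfolding finite_signed_measure_def by auto

lemma V_add2:
  assumes f: "f \<in> Linf M" and X: "X \<in> sets M" and Y: "Y \<in> sets M" and d: "X \<inter> Y = {}"
  shows "V (X \<union> Y) f = V X f + V Y f"
proof -
  define A where "A n = (if n = 0 then X else if n = 1 then Y else {})" for n :: nat
  have "range A \<subseteq> sets M" using X Y by (auto simp: A_def)
  moreover have "disjoint_family A" using d unfolding disjoint_family_on_def A_def by auto
  ultimately have s: "(\<lambda>n. V (A n) f) sums V (\<Union>n. A n) f"
    using C1_signed[OF f] unfolding finite_signed_measure_def by auto
  have U: "(\<Union>n. A n) = X \<union> Y"
  proof
    show "(\<Union>n. A n) \<subseteq> X \<union> Y" by (auto simp: A_def split: if_splits)
    show "X \<union> Y \<subseteq> (\<Union>n. A n)"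
    proof -
      have "A 0 = X" "A 1 = Y" by (auto simp: A_def)
      then show ?thesis by (metis UN_upper Un_least iso_tuple_UNIV_I)
    qed
  qed
  have "(\<lambda>n. V (A n) f) sums (\<Sum>n\<in>{0,1}. V (A n) f)"
    by (rule sums_finite) (auto simp: A_def V_empty[OF f])
  then have "V (\<Union>n. A n) f = V X f + V Y f" using s sums_unique2 by (fastforce simp: A_def)
  then show ?thesis using U by simp
qed

lemma V_sum:
  assumes "finite S" and f: "f \<in> Linf M" 
  shows "(\<forall>s\<in>S. A s \<in> sets M) \<Longrightarrow> disjoint_family_on A S \<Longrightarrow> V (\<Union>s\<in>S. A s) f = (\<Sum>s\<in>S. V (A s) f)"
  using assms(1)
proof (induction S rule: finite_induct)
  case empty then show ?case using V_empty[OF f] by simp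
next
  case (insert x F)
  have d: "A x \<inter> (\<Union>s\<in>F. A s) = {}"
    using insert.prems(2) insert.hyps(2) unfolding disjoint_family_on_def by auto
  have "V (\<Union>s\<in>insert x F. A s) f = V (A x \<union> (\<Union>s\<in>F. A s)) f" by simp
  also have "\<dots> = V (A x) f + V (\<Union>s\<in>F. A s) f"
    using insert.prems insert.hyps by (intro V_add2[OF f _ _ d]) (auto intro!: sets.finite_UN)
  also have "V (\<Union>s\<in>F. A s) f = (\<Sum>s\<in>F. V (A s) f)"
    using insert.prems by (intro insert.IH) (auto simp: disjoint_family_on_def)
  finally show ?case using insert.hyps by simp
qed

lemma V_cong: "A \<in> sets M \<Longrightarrow> f \<in> Linf M \<Longrightarrow> g \<in> Linf M \<Longrightarrow> (\<forall>\<omega>\<in>space M. f \<omega> = g \<omega>) \<Longrightarrow> V A f = V A g"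
  using C3_mono[of A f g] C3_mono[of A g f] by auto

lemma Linf_mult_ind: "f \<in> Linf M \<Longrightarrow> A \<in> sets M \<Longrightarrow> (\<lambda>\<omega>. f \<omega> * indicator A \<omega>) \<in> Linf M"
proof -
  assume f: "f \<in> Linf M" and A: "A \<in> sets M"
  then obtain B where B: "\<forall>x\<in>space M. \<bar>f x\<bar> \<le> B" and fm: "f \<in> borel_measurable M" unfolding Linf_def by auto
  have "\<forall>x\<in>space M. \<bar>f x * indicator A x\<bar> \<le> B"
    using B by (auto simp: indicator_def)
  then show ?thesis unfolding Linf_def using fm A by auto
qed

end
context setting begin

lemma simple_id:
  fixes r :: "'a \<Rightarrow> rat"
  assumes g: "(\<lambda>\<omega>. real_of_rat (r \<omega>)) \<in> Linf M" and fin: "finite (r ` space M)"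
  shows "integrable P (\<lambda>\<omega>. u \<omega> (r \<omega>)) \<and> V (space M) (\<lambda>\<omega>. real_of_rat (r \<omega>)) = integral\<^sup>L P (\<lambda>\<omega>. u \<omega> (r \<omega>))"
proof -
  have gm[measurable]: "(\<lambda>\<omega>. real_of_rat (r \<omega>)) \<in> borel_measurable M" using g unfolding Linf_def by auto
  define S where "S = r ` space M"
  define A where "A s = {\<omega>\<in>space M. r \<omega> = s}" for s
  have A_alt: "A s = {\<omega>\<in>space M. real_of_rat (r \<omega>) = real_of_rat s}" for s unfolding A_def by simp
  have Am: "A s \<in> sets M" for s unfolding A_alt by measurable
  have AmP: "A s \<in> sets P" for s using Am by simp
  have U: "space M = (\<Union>s\<in>S. A s)" unfolding S_def A_def by auto
  have disj: "disjoint_family_on A S" unfolding disjoint_family_on_def A_def by auto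
  have "V (space M) (\<lambda>\<omega>. real_of_rat (r \<omega>)) = (\<Sum>s\<in>S. V (A s) (\<lambda>\<omega>. real_of_rat (r \<omega>)))"
    unfolding U by (rule V_sum) (use fin g Am disj in \<open>auto simp: S_def\<close>)
  also have "\<dots> = (\<Sum>s\<in>S. integral\<^sup>L P (\<lambda>\<omega>. indicator (A s) \<omega> *\<^sub>R u \<omega> s))"
  proof (rule sum.cong[OF refl])
    fix s
    have "V (A s) (\<lambda>\<omega>. real_of_rat (r \<omega>)) = V (space M) (\<lambda>\<omega>. real_of_rat (r \<omega>) * indicator (A s) \<omega>)"
      by (rule C2[OF Am g])
    also have "\<dots> = V (space M) (\<lambda>\<omega>. real_of_rat s * indicator (A s) \<omega>)"
      by (rule V_cong[OF _ Linf_mult_ind[OF g Am] Linf_mult_ind[OF Linf_const Am]]) (auto simp: indicator_def A_def)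
    also have "\<dots> = V (A s) (\<lambda>_. real_of_rat s)"
      by (rule C2[OF Am Linf_const, symmetric])
    also have "\<dots> = integral\<^sup>L P (\<lambda>\<omega>. indicator (A s) \<omega> *\<^sub>R u \<omega> s)"
      unfolding u_RN[OF Am] set_lebesgue_integral_def ..
    finally show "V (A s) (\<lambda>\<omega>. real_of_rat (r \<omega>)) = integral\<^sup>L P (\<lambda>\<omega>. indicator (A s) \<omega> *\<^sub>R u \<omega> s)" .
  qed
  also have "\<dots> = integral\<^sup>L P (\<lambda>\<omega>. \<Sum>s\<in>S. indicator (A s) \<omega> *\<^sub>R u \<omega> s)"
    using Bochner_Integration.integral_sum[of S P "\<lambda>s \<omega>. indicator (A s) \<omega> *\<^sub>R u \<omega> s"] integrable_mult_indicator[OF AmP u_int] by simp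
  also have "\<dots> = integral\<^sup>L P (\<lambda>\<omega>. u \<omega> (r \<omega>))"
  proof (rule Bochner_Integration.integral_cong[OF refl])
    fix \<omega> assume w: "\<omega> \<in> space P"
    have "(\<Sum>s\<in>S. indicator (A s) \<omega> *\<^sub>R u \<omega> s) = (\<Sum>s\<in>S. if s = r \<omega> then u \<omega> s else 0)"
      using w by (intro sum.cong refl) (auto simp: A_def)
    also have "\<dots> = u \<omega> (r \<omega>)" using w fin by (simp add: S_def)
    finally show "(\<Sum>s\<in>S. indicator (A s) \<omega> *\<^sub>R u \<omega> s) = u \<omega> (r \<omega>)" .
  qed
  finally have eq: "V (space M) (\<lambda>\<omega>. real_of_rat (r \<omega>)) = integral\<^sup>L P (\<lambda>\<omega>. u \<omega> (r \<omega>))" .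
  have "integrable P (\<lambda>\<omega>. \<Sum>s\<in>S. indicator (A s) \<omega> *\<^sub>R u \<omega> s)"
    using Bochner_Integration.integrable_sum[of S P "\<lambda>s \<omega>. indicator (A s) \<omega> *\<^sub>R u \<omega> s"] integrable_mult_indicator[OF AmP u_int] by simp
  moreover have "integrable P (\<lambda>\<omega>. \<Sum>s\<in>S. indicator (A s) \<omega> *\<^sub>R u \<omega> s) = integrable P (\<lambda>\<omega>. u \<omega> (r \<omega>))"
  proof (rule Bochner_Integration.integrable_cong[OF refl])
    fix \<omega> assume w: "\<omega> \<in> space P"
    have "(\<Sum>s\<in>S. indicator (A s) \<omega> *\<^sub>R u \<omega> s) = (\<Sum>s\<in>S. if s = r \<omega> then u \<omega> s else 0)"
      using w by (intro sum.cong refl) (auto simp: A_def)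
    also have "\<dots> = u \<omega> (r \<omega>)" using w fin by (simp add: S_def)
    finally show "(\<Sum>s\<in>S. indicator (A s) \<omega> *\<^sub>R u \<omega> s) = u \<omega> (r \<omega>)" .
  qed
  ultimately have "integrable P (\<lambda>\<omega>. u \<omega> (r \<omega>))" by simp
  with eq show ?thesis by simp
qed

end
context setting begin

lemma main_id:
  assumes f: "f \<in> Linf M"
  shows "integrable P (\<lambda>\<omega>. u_plus u \<omega> (f \<omega>)) \<and> V (space M) f = integral\<^sup>L P (\<lambda>\<omega>. u_plus u \<omega> (f \<omega>))"
proof -
  have fm[measurable]: "f \<in> borel_measurable M" using f unfolding Linf_def by auto
  obtain B where B: "\<forall>\<omega>\<in>space M. \<bar>f \<omega>\<bar> \<le> B" using f unfolding Linf_def by auto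
  obtain K :: nat where K: "B \<le> real K" using real_arch_simple by blast
  have fK: "\<bar>f \<omega>\<bar> \<le> real K" if "\<omega> \<in> space M" for \<omega> using B K that by force
  define r where "r n \<omega> = (of_int \<lceil>f \<omega> * 2^n\<rceil> / 2^n :: rat)" for n \<omega>
  define fn where "fn n \<omega> = real_of_rat (r n \<omega>)" for n \<omega>
  have fn_eq: "fn n \<omega> = real_of_int \<lceil>f \<omega> * 2^n\<rceil> / 2^n" for n \<omega>
    unfolding fn_def r_def by (simp add: of_rat_divide of_rat_power)
  have fn_ge: "f \<omega> \<le> fn n \<omega>" for n \<omega>
  proof -
    have "f \<omega> * 2^n \<le> real_of_int \<lceil>f \<omega> * 2^n\<rceil>" by (rule le_of_int_ceiling)
    then show ?thesis unfolding fn_eq by (simp add: field_simps)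
  qed
  have fn_le: "fn n \<omega> \<le> f \<omega> + (1/2)^n" for n \<omega>
  proof -
    have "real_of_int \<lceil>f \<omega> * 2^n\<rceil> \<le> f \<omega> * 2^n + 1" by (rule of_int_ceiling_le_add_one)
    then show ?thesis unfolding fn_eq by (simp add: field_simps power_one_over)
  qed
  have fn_bd: "\<bar>fn n \<omega>\<bar> \<le> real K + 1" if "\<omega> \<in> space M" for n \<omega>
  proof -
    have "(1/2::real)^n \<le> 1" by (simp add: power_le_one)
    then show ?thesis using fn_ge[of \<omega> n] fn_le[of n \<omega>] fK[OF that] by linarith
  qed
  have fn_meas[measurable]: "fn n \<in> borel_measurable M" for n
    unfolding fn_eq[abs_def] by measurable
  have fn_Linf: "fn n \<in> Linf M" for n
    unfolding Linf_def using fn_bd fn_meas by blast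
  have fn_lim: "(\<lambda>n. fn n \<omega>) \<longlonglongrightarrow> f \<omega>" for \<omega>
  proof (rule tendsto_sandwich[of "\<lambda>_. f \<omega>" _ _ "\<lambda>n. f \<omega> + (1/2)^n"])
    show "\<forall>\<^sub>F n in sequentially. f \<omega> \<le> fn n \<omega>" using fn_ge by simp
    show "\<forall>\<^sub>F n in sequentially. fn n \<omega> \<le> f \<omega> + (1/2)^n" using fn_le by simp
    have "(\<lambda>n. f \<omega> + (1/2::real)^n) \<longlonglongrightarrow> f \<omega> + 0"
      by (intro tendsto_add tendsto_const LIMSEQ_realpow_zero) auto
    then show "(\<lambda>n. f \<omega> + (1/2)^n) \<longlonglongrightarrow> f \<omega>" by simp
  qed simp
  have r_fin: "finite (r n ` space M)" for n
  proof -
    let ?I = "{- (int K * 2^n) - 1 .. int K * 2^n + 1}"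
    have "r n ` space M \<subseteq> (\<lambda>k. of_int k / 2^n) ` ?I"
    proof
      fix y assume "y \<in> r n ` space M"
      then obtain \<omega> where w: "\<omega> \<in> space M" and y: "y = r n \<omega>" by auto
      have "\<bar>f \<omega> * 2^n\<bar> \<le> real K * 2^n" using fK[OF w] by (simp add: abs_mult mult_right_mono)
      then have x1: "-(real K * 2^n) \<le> f \<omega> * 2^n" and x2: "f \<omega> * 2^n \<le> real K * 2^n"
        by (simp_all only: abs_le_iff) linarith+
      have "real_of_int (- (int K * 2^n) - 1) \<le> real_of_int \<lceil>f \<omega> * 2^n\<rceil>"
      proof -
        have c: "f \<omega> * 2^n \<le> real_of_int \<lceil>f \<omega> * 2^n\<rceil>" by (rule le_of_int_ceiling)
        have "real_of_int (- (int K * 2^n) - 1) = -(real K * 2^n) - 1" by simp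
        then show ?thesis using c x1 by linarith
      qed
      moreover have "real_of_int \<lceil>f \<omega> * 2^n\<rceil> \<le> real_of_int (int K * 2^n + 1)"
      proof -
        have c: "real_of_int \<lceil>f \<omega> * 2^n\<rceil> \<le> f \<omega> * 2^n + 1" by (rule of_int_ceiling_le_add_one)
        have "real_of_int (int K * 2^n + 1) = real K * 2^n + 1" by simp
        then show ?thesis using c x2 by linarith
      qed
      ultimately have "\<lceil>f \<omega> * 2^n\<rceil> \<in> ?I" by (simp only: of_int_le_iff atLeastAtMost_iff)
      then show "y \<in> (\<lambda>k. of_int k / 2^n) ` ?I" unfolding y r_def by blast
    qed
    then show ?thesis by (rule finite_subset) simp
  qed
  have sid: "integrable P (\<lambda>\<omega>. u \<omega> (r n \<omega>)) \<and> V (space M) (fn n) = integral\<^sup>L P (\<lambda>\<omega>. u \<omega> (r n \<omega>))" for n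
    using simple_id[of "r n"] fn_Linf[of n] r_fin[of n] unfolding fn_def by simp
  have rn_meas: "r n \<in> measurable M (count_space UNIV)" for n
    unfolding measurable_count_space_eq2_countable
  proof (intro conjI ballI)
    fix a
    have "r n -` {a} \<inter> space M = {\<omega>\<in>space M. fn n \<omega> = real_of_rat a}"
      unfolding fn_def by auto
    also have "\<dots> \<in> sets M" by measurable
    finally show "r n -` {a} \<inter> space M \<in> sets M" .
  qed auto
  have s_meas: "(\<lambda>\<omega>. u \<omega> (r n \<omega>)) \<in> borel_measurable P" for n
    using measurable_compose_countable[where f="\<lambda>q \<omega>. u \<omega> q", OF u_meas rn_meas] by simp
  have seq_eq: "u_plus u \<omega> (fn n \<omega>) = (if \<omega> \<in> Theta u then u \<omega> (r n \<omega>) else fn n \<omega>)" for n \<omega>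
    unfolding fn_def using up_rat up_off by auto
  have seq_meas: "(\<lambda>\<omega>. u_plus u \<omega> (fn n \<omega>)) \<in> borel_measurable M" for n
    unfolding seq_eq using s_meas[of n] by measurable
  have G_lim: "(\<lambda>n. u_plus u \<omega> (fn n \<omega>)) \<longlonglongrightarrow> u_plus u \<omega> (f \<omega>)" for \<omega>
  proof (cases "\<omega> \<in> Theta u")
    case True then show ?thesis using up_cont[OF True fn_ge fn_lim] by simp
  next
    case False then show ?thesis using fn_lim[of \<omega>] up_off[OF False] by simp
  qed
  have G_meas: "(\<lambda>\<omega>. u_plus u \<omega> (f \<omega>)) \<in> borel_measurable P"
    using borel_measurable_LIMSEQ_real[OF G_lim seq_meas] by simp
  define c :: rat where "c = of_nat (K + 1)"
  have cr: "real_of_rat c = real K + 1" unfolding c_def of_rat_of_nat_eq by simp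
  define w where "w \<omega> = \<bar>u \<omega> (-c)\<bar> + \<bar>u \<omega> c\<bar>" for \<omega>
  have w_int: "integrable P w" unfolding w_def using u_int by auto
  have bound: "AE \<omega> in P. norm (u \<omega> (r n \<omega>)) \<le> w \<omega>" for n
    using AE_Theta AE_space
  proof eventually_elim
    case (elim \<omega>)
    have "\<omega> \<in> space M" using elim(2) by simp
    then have "\<bar>fn n \<omega>\<bar> \<le> real K + 1" by (rule fn_bd)
    then have "real_of_rat (-c) \<le> real_of_rat (r n \<omega>)" "real_of_rat (r n \<omega>) \<le> real_of_rat c"
      unfolding fn_def of_rat_minus cr by linarith+
    then have "-c \<le> r n \<omega>" "r n \<omega> \<le> c" by (simp_all only: of_rat_less_eq)
    then have "u \<omega> (-c) \<le> u \<omega> (r n \<omega>)" "u \<omega> (r n \<omega>) \<le> u \<omega> c"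
      using Th_mono'[OF elim(1)] by blast+
    then show ?case unfolding w_def by simp
  qed
  have conv: "AE \<omega> in P. (\<lambda>n. u \<omega> (r n \<omega>)) \<longlonglongrightarrow> u_plus u \<omega> (f \<omega>)"
    using AE_Theta
  proof eventually_elim
    case (elim \<omega>)
    then show ?case using G_lim[of \<omega>] unfolding seq_eq by simp
  qed
  have "(\<lambda>n. integral\<^sup>L P (\<lambda>\<omega>. u \<omega> (r n \<omega>))) \<longlonglongrightarrow> integral\<^sup>L P (\<lambda>\<omega>. u_plus u \<omega> (f \<omega>))"
    and Gint: "integrable P (\<lambda>\<omega>. u_plus u \<omega> (f \<omega>))"
    using integral_dominated_convergence[OF G_meas s_meas w_int conv bound]
      integrable_dominated_convergence[OF G_meas s_meas w_int conv bound] by auto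
  moreover have "(\<lambda>n. integral\<^sup>L P (\<lambda>\<omega>. u \<omega> (r n \<omega>))) \<longlonglongrightarrow> V (space M) f"
  proof -
    have "(\<lambda>n. V (space M) (fn n)) \<longlonglongrightarrow> V (space M) f"
      by (rule C4) (use fn_Linf f fn_bd fn_lim in auto)
    then show ?thesis using sid by simp
  qed
  ultimately show ?thesis using LIMSEQ_unique by blast
qed

end
theorem mainTheorem11:
  fixes M :: "'a measure"
    and V :: "'a set \<Rightarrow> ('a \<Rightarrow> real) \<Rightarrow> real"
    and u :: "'a \<Rightarrow> rat \<Rightarrow> real"
  assumes C1_signed: "\<And>f. f \<in> Linf M \<Longrightarrow> finite_signed_measure M (\<lambda>A. V A f)"
    and C1_zero: "\<And>A. A \<in> sets M \<Longrightarrow> V A (\<lambda>_. 0) = 0"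
    and C1_prob: "probability_set_function M (\<lambda>A. V A (\<lambda>_. 1))"
    and C2: "\<And>A f. A \<in> sets M \<Longrightarrow> f \<in> Linf M \<Longrightarrow>
               V A f = V (space M) (\<lambda>\<omega>. f \<omega> * indicator A \<omega>)"
    and C3_mono: "\<And>A f g. A \<in> sets M \<Longrightarrow> f \<in> Linf M \<Longrightarrow> g \<in> Linf M \<Longrightarrow>
               (\<forall>\<omega>\<in>space M. f \<omega> \<le> g \<omega>) \<Longrightarrow> V A f \<le> V A g"
    and C3_strict: "\<And>A (x::real) y. A \<in> sets M \<Longrightarrow> V A (\<lambda>_. 1) > 0 \<Longrightarrow> x < y \<Longrightarrow>
               V A (\<lambda>_. x) < V A (\<lambda>_. y)"
    and C4: "\<And>A fn f. A \<in> sets M \<Longrightarrow> (\<forall>n. fn n \<in> Linf M) \<Longrightarrow> f \<in> Linf M \<Longrightarrow>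
               (\<exists>B. \<forall>n. \<forall>\<omega>\<in>space M. \<bar>fn n \<omega>\<bar> \<le> B) \<Longrightarrow>
               (\<forall>\<omega>\<in>space M. (\<lambda>n. fn n \<omega>) \<longlonglongrightarrow> f \<omega>) \<Longrightarrow>
               (\<lambda>n. V A (fn n)) \<longlonglongrightarrow> V A f"
    and u_meas: "\<And>q. (\<lambda>\<omega>. u \<omega> q) \<in> borel_measurable M"
    and u_int: "\<And>q. integrable (Pm M V) (\<lambda>\<omega>. u \<omega> q)"
    and u_RN: "\<And>q A. A \<in> sets M \<Longrightarrow>
               V A (\<lambda>_. real_of_rat q) = set_lebesgue_integral (Pm M V) A (\<lambda>\<omega>. u \<omega> q)"
    and u_zero: "\<And>\<omega>. u \<omega> 0 = 0"
  shows "(\<forall>f\<in>Linf M. integrable (Pm M V) (\<lambda>\<omega>. u_plus u \<omega> (f \<omega>)))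
       \<and> (\<forall>f\<in>Linf M. \<forall>g\<in>Linf M. (\<forall>\<omega>\<in>space M. f \<omega> \<le> g \<omega>) \<longrightarrow> T_u M V u f \<le> T_u M V u g)
       \<and> (\<forall>fn f. (\<forall>n. fn n \<in> Linf M) \<longrightarrow> f \<in> Linf M \<longrightarrow>
               (\<exists>B. \<forall>n. \<forall>\<omega>\<in>space M. \<bar>fn n \<omega>\<bar> \<le> B) \<longrightarrow>
               (\<forall>\<omega>\<in>space M. (\<lambda>n. fn n \<omega>) \<longlonglongrightarrow> f \<omega>) \<longrightarrow>
               (\<lambda>n. T_u M V u (fn n)) \<longlonglongrightarrow> T_u M V u f)
       \<and> (\<forall>f\<in>Linf M. \<forall>A\<in>sets M. V A f = T_u M V u (\<lambda>\<omega>. f \<omega> * indicator A \<omega>))"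
proof -
  interpret setting M V u
    by (rule setting.intro) (rule assms; assumption)+
  have T: "\<And>f. f \<in> Linf M \<Longrightarrow> T_u M V u f = V (space M) f"
    using main_id unfolding T_u_def by simp
  show ?thesis
  proof (intro conjI ballI allI impI)
    fix f assume "f \<in> Linf M"
    then show "integrable (Pm M V) (\<lambda>\<omega>. u_plus u \<omega> (f \<omega>))" using main_id by blast
  next
    fix f g assume "f \<in> Linf M" "g \<in> Linf M" "\<forall>\<omega>\<in>space M. f \<omega> \<le> g \<omega>"
    then show "T_u M V u f \<le> T_u M V u g" using T C3_mono[of "space M" f g] by simp
  next
    fix fn f assume h: "\<forall>n. fn n \<in> Linf M" "f \<in> Linf M" "\<exists>B. \<forall>n. \<forall>\<omega>\<in>space M. \<bar>fn n \<omega>\<bar> \<le> B"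
      "\<forall>\<omega>\<in>space M. (\<lambda>n. fn n \<omega>) \<longlonglongrightarrow> f \<omega>"
    then show "(\<lambda>n. T_u M V u (fn n)) \<longlonglongrightarrow> T_u M V u f" using T C4[of "space M" fn f] by simp
  next
    fix f A assume "f \<in> Linf M" "A \<in> sets M"
    then show "V A f = T_u M V u (\<lambda>\<omega>. f \<omega> * indicator A \<omega>)"
      using T[OF Linf_mult_ind] C2 by simp
  qed
qed

end
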